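(* Let $p$ be a POP of length $k\geq 1$ and let $0\leq i\leq s\leq k$ be such that every label in $$I=\{1,2,\ldots,i\}\cup\{k-s+i+1,\,k-s+i+2,\ldots,k\}$$ is isolated in $p$ (incomparable to every other label). Let $p_1$ be the POP of length $k-s$ obtained from $p$ by deleting the labels in $I$ and relabeling the remaining labels $i+1,\ldots,k-s+i$ as $1,\ldots,k-s$ in an order-preserving way (i.e. label $j$ becomes $j-i$), keeping the order relations among them. Let $a(n)=|S_n(p)|$ and $b(n)=|S_n(p_1)|$. Then $a(n)=n!$ for $n<k$ and $$a(n)=\frac{n!}{(n-s)!}\,b(n-s)\quad\text{for } n\geq k.$$
   Context: An $n$-permutation is a word $\pi=\pi_1\cdots\pi_n$ containing each of $1,\ldots,n$ exactly once; $S_n$ is the set of $n$-permutations ($S_0$ consists of the empty permutation). A partially ordered pattern (POP) $p$ of length $k$ is a partial order $\prec$ on the label set $\{1,\ldots,k\}$ (for $k=0$ it is the empty pattern, contained in every permutation). An $n$-permutation $\pi$ contains $p$ if there are indices $1\leq i_1<\cdots<i_k\leq n$ such that $\pi_{i_j}<\pi_{i_m}$ whenever $j\prec m$ (no condition between incomparable labels); otherwise $\pi$ avoids $p$. $S_n(p)$ denotes the set of $n$-permutations avoiding $p$. *)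

theory Defs
  imports "HOL-Combinatorics.Multiset_Permutations"
begin

definition is_pop :: "nat \<Rightarrow> (nat \<times> nat) set \<Rightarrow> bool" where
  "is_pop k P \<longleftrightarrow> P \<subseteq> {1..k} \<times> {1..k} \<and> irrefl P \<and> trans P"

text \<open>n-permutations as lists (1-based values, list positions shifted by one).\<close>
definition perms :: "nat \<Rightarrow> nat list set" where
  "perms n = permutations_of_set {1..n}"

definition contains_pop :: "nat list \<Rightarrow> nat \<Rightarrow> (nat \<times> nat) set \<Rightarrow> bool" where
  "contains_pop w k P \<longleftrightarrow>
     (\<exists>f :: nat \<Rightarrow> nat. strict_mono_on {1..k} f \<and> f ` {1..k} \<subseteq> {1..length w} \<and>
        (\<forall>j m. (j, m) \<in> P \<longrightarrow> w ! (f j - 1) < w ! (f m - 1)))"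

definition avoiders :: "nat \<Rightarrow> nat \<Rightarrow> (nat \<times> nat) set \<Rightarrow> nat list set" where
  "avoiders n k P = {w \<in> perms n. \<not> contains_pop w k P}"

definition isolated :: "(nat \<times> nat) set \<Rightarrow> nat \<Rightarrow> bool" where
  "isolated P j \<longleftrightarrow> (\<forall>m. (j, m) \<notin> P \<and> (m, j) \<notin> P)"

end

theory Submission
  imports Defs
begin

lemma rank_exists:
  fixes A :: "nat set"
  assumes "finite A"
  shows "\<exists>h. h ` A = {1..card A} \<and> strict_mono_on A h"
  using assms
proof (induct A rule: finite_linorder_max_induct)
  case empty
  then show ?case by (auto simp: strict_mono_on_def)
next
  case (insert b A)
  then obtain h where h: "h ` A = {1..card A}" "strict_mono_on A h" by blast
  have bA: "b \<notin> A" using insert by auto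
  define h' where "h' = h(b := Suc (card A))"
  have "h' ` insert b A = insert (Suc (card A)) (h ` A)"
    using bA by (auto simp: h'_def)
  also have "\<dots> = {1..card (insert b A)}" using h(1) bA insert(1) by auto
  finally have 1: "h' ` insert b A = {1..card (insert b A)}" .
  have 2: "strict_mono_on (insert b A) h'"
  proof (rule strict_mono_onI)
    fix r s assume rs: "r \<in> insert b A" "s \<in> insert b A" "r < s"
    show "h' r < h' s"
    proof (cases "s = b")
      case True
      then have "r \<in> A" "r \<noteq> b" using rs by auto
      then have "h r \<in> {1..card A}" using h(1) by auto
      then show ?thesis using True \<open>r \<noteq> b\<close> by (auto simp: h'_def)
    next
      case False
      then have "s \<in> A" using rs by auto
      then have "r \<noteq> b" using insert(2) rs by auto
      then have "r \<in> A" using rs by auto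
      then show ?thesis using h(2) \<open>s \<in> A\<close> \<open>r \<noteq> b\<close> False rs(3)
        by (auto simp: h'_def strict_mono_on_def)
    qed
  qed
  show ?case using 1 2 by blast
qed

lemma contains_map:
  assumes "strict_mono_on (set w) h" "P \<subseteq> {1..k} \<times> {1..k}"
  shows "contains_pop (map h w) k P \<longleftrightarrow> contains_pop w k P"
proof -
  have key: "\<And>f. f ` {1..k} \<subseteq> {1..length w} \<Longrightarrow>
     (\<forall>j m. (j, m) \<in> P \<longrightarrow> map h w ! (f j - 1) < map h w ! (f m - 1)) \<longleftrightarrow>
     (\<forall>j m. (j, m) \<in> P \<longrightarrow> w ! (f j - 1) < w ! (f m - 1))"
  proof -
    fix f assume f: "f ` {1..k} \<subseteq> {1..length w}"
    have "(map h w ! (f j - 1) < map h w ! (f m - 1)) \<longleftrightarrow> (w ! (f j - 1) < w ! (f m - 1))"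
      if "(j, m) \<in> P" for j m
    proof -
      have jm: "j \<in> {1..k}" "m \<in> {1..k}" using that assms(2) by auto
      have "f j - 1 < length w" "f m - 1 < length w" using f jm by force+
      then show ?thesis using strict_mono_on_less[OF assms(1)] by simp
    qed
    then show "?thesis f" by blast
  qed
  show ?thesis unfolding contains_pop_def using key by auto
qed

definition cnt :: "nat \<Rightarrow> (nat \<times> nat) set \<Rightarrow> nat set \<Rightarrow> nat" where
  "cnt k P A = card {w \<in> permutations_of_set A. \<not> contains_pop w k P}"

lemma cnt_image:
  assumes "strict_mono_on A h" "P \<subseteq> {1..k} \<times> {1..k}"
  shows "cnt k P (h ` A) = cnt k P A"
proof -
  have inj: "inj_on h A" using assms(1) strict_mono_on_imp_inj_on by blast
  have "{w \<in> permutations_of_set (h ` A). \<not> contains_pop w k P}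
      = map h ` {w \<in> permutations_of_set A. \<not> contains_pop w k P}"
  proof -
    have "\<And>w. w \<in> permutations_of_set A \<Longrightarrow> contains_pop (map h w) k P \<longleftrightarrow> contains_pop w k P"
      using contains_map[OF _ assms(2)] assms(1) permutations_of_setD(1) by metis
    then show ?thesis
      by (auto simp: permutations_of_set_image_inj[OF inj])
  qed
  moreover have "inj_on (map h) {w \<in> permutations_of_set A. \<not> contains_pop w k P}"
    by (rule inj_onI) (metis (no_types, lifting) inj_on_map_eq_map inj mem_Collect_eq permutations_of_setD(1) sup.idem)
  ultimately show ?thesis unfolding cnt_def by (simp add: card_image)
qed

lemma cnt_card:
  assumes "finite A" "P \<subseteq> {1..k} \<times> {1..k}"
  shows "cnt k P A = cnt k P {1..card A}"
proof -
  obtain h where "h ` A = {1..card A}" "strict_mono_on A h" using rank_exists[OF assms(1)] by blast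
  then show ?thesis using cnt_image[OF _ assms(2)] by metis
qed


lemma count_cons:
  assumes "finite A" "A \<noteq> {}"
  shows "card {w \<in> permutations_of_set A. Q w} =
         (\<Sum>x\<in>A. card {v \<in> permutations_of_set (A - {x}). Q (x # v)})"
proof -
  have "{w \<in> permutations_of_set A. Q w} =
        (\<Union>x\<in>A. (\<lambda>v. x # v) ` {v \<in> permutations_of_set (A - {x}). Q (x # v)})"
    by (subst permutations_of_set_nonempty[OF assms(2)]) auto
  also have "card \<dots> = (\<Sum>x\<in>A. card ((\<lambda>v. x # v) ` {v \<in> permutations_of_set (A - {x}). Q (x # v)}))"
    by (rule card_UN_disjoint) (use assms in auto)
  also have "\<dots> = (\<Sum>x\<in>A. card {v \<in> permutations_of_set (A - {x}). Q (x # v)})"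
    by (intro sum.cong refl card_image) (auto intro: inj_onI)
  finally show ?thesis .
qed

lemma perms_snoc:
  assumes "A \<noteq> {}"
  shows "permutations_of_set A = (\<Union>x\<in>A. (\<lambda>v. v @ [x]) ` permutations_of_set (A - {x}))"
proof -
  have "permutations_of_set A = rev ` permutations_of_set A" by simp
  also have "\<dots> = rev ` (\<Union>x\<in>A. (\<lambda>xs. x # xs) ` permutations_of_set (A - {x}))"
    by (subst permutations_of_set_nonempty[OF assms]) simp
  also have "\<dots> = (\<Union>x\<in>A. (\<lambda>v. rev v @ [x]) ` permutations_of_set (A - {x}))"
    by (simp add: image_UN image_image)
  also have "\<dots> = (\<Union>x\<in>A. (\<lambda>v. v @ [x]) ` permutations_of_set (A - {x}))"
  proof (intro SUP_cong refl)
    fix x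
    have "(\<lambda>v. rev v @ [x]) ` permutations_of_set (A - {x}) = (\<lambda>v. v @ [x]) ` (rev ` permutations_of_set (A - {x}))"
      by (simp only: image_image)
    then show "(\<lambda>v. rev v @ [x]) ` permutations_of_set (A - {x}) = (\<lambda>v. v @ [x]) ` permutations_of_set (A - {x})"
      by (simp only: rev_permutations_of_set)
  qed
  finally show ?thesis .
qed

lemma count_snoc:
  assumes "finite A" "A \<noteq> {}"
  shows "card {w \<in> permutations_of_set A. Q w} =
         (\<Sum>x\<in>A. card {v \<in> permutations_of_set (A - {x}). Q (v @ [x])})"
proof -
  have "{w \<in> permutations_of_set A. Q w} =
        (\<Union>x\<in>A. (\<lambda>v. v @ [x]) ` {v \<in> permutations_of_set (A - {x}). Q (v @ [x])})"
    by (subst perms_snoc[OF assms(2)]) auto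
  also have "card \<dots> = (\<Sum>x\<in>A. card ((\<lambda>v. v @ [x]) ` {v \<in> permutations_of_set (A - {x}). Q (v @ [x])}))"
    by (rule card_UN_disjoint) (use assms in auto)
  also have "\<dots> = (\<Sum>x\<in>A. card {v \<in> permutations_of_set (A - {x}). Q (v @ [x])})"
    by (intro sum.cong refl card_image) (auto intro: inj_onI)
  finally show ?thesis .
qed

definition shiftP :: "nat \<Rightarrow> (nat \<times> nat) set \<Rightarrow> (nat \<times> nat) set" where
  "shiftP t P = (\<lambda>(j, m). (j - t, m - t)) ` P"

lemma contains_first:
  assumes "P \<subseteq> {1..k} \<times> {1..k}" "k \<ge> 1" "isolated P 1"
  shows "contains_pop (x # w) k P \<longleftrightarrow> contains_pop w (k - 1) (shiftP 1 P)"
proof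
  have Pge: "\<And>j m. (j, m) \<in> P \<Longrightarrow> 2 \<le> j \<and> 2 \<le> m \<and> j \<le> k \<and> m \<le> k"
  proof -
    fix j m assume "(j, m) \<in> P"
    moreover have "j \<noteq> 1" "m \<noteq> 1" using assms(3) calculation unfolding isolated_def by blast+
    ultimately show "2 \<le> j \<and> 2 \<le> m \<and> j \<le> k \<and> m \<le> k" using assms(1) by force
  qed
  {
    assume "contains_pop (x # w) k P"
    then obtain f where f: "strict_mono_on {1..k} f" "f ` {1..k} \<subseteq> {1..length w + 1}"
      "\<forall>j m. (j, m) \<in> P \<longrightarrow> (x # w) ! (f j - 1) < (x # w) ! (f m - 1)"
      unfolding contains_pop_def by auto
    define g where "g j = f (j + 1) - 1" for j
    have f1: "f 1 \<ge> 1" using f(2) assms(2) by force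
    have fge: "f j \<ge> 2" if "j \<in> {2..k}" for j
    proof -
      have "f 1 < f j" using f(1) that assms(2) by (auto simp: strict_mono_on_def)
      then show ?thesis using f1 by linarith
    qed
    have "strict_mono_on {1..k - 1} g"
      unfolding strict_mono_on_def g_def
    proof (intro allI impI)
      fix r s assume "r \<in> {1..k - 1} \<and> s \<in> {1..k - 1} \<and> r < s"
      then have rs1: "r + 1 \<in> {2..k}" "s + 1 \<in> {1..k}" "r + 1 < s + 1" by auto
      then have "f (r + 1) < f (s + 1)" using f(1) by (simp add: strict_mono_onD)
      moreover have "f (r + 1) \<ge> 2" using fge rs1 by auto
      ultimately show "f (r + 1) - 1 < f (s + 1) - 1" by linarith
    qed
    moreover have "g ` {1..k - 1} \<subseteq> {1..length w}"
    proof
      fix y assume "y \<in> g ` {1..k - 1}"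
      then obtain j where j: "j \<in> {1..k - 1}" "y = g j" by auto
      have j1: "j + 1 \<in> {1..k}" using j by auto
      have "f (j + 1) \<in> f ` {1..k}" using j1 by blast
      then have "f (j + 1) \<in> {1..length w + 1}" using f(2) by blast
      then have "f (j + 1) \<le> length w + 1" by simp
      moreover have "f (j + 1) \<ge> 2" using fge[of "j+1"] j by auto
      ultimately show "y \<in> {1..length w}" using j by (auto simp: g_def)
    qed
    moreover have "\<forall>j m. (j, m) \<in> shiftP 1 P \<longrightarrow> w ! (g j - 1) < w ! (g m - 1)"
    proof (intro allI impI)
      fix j m assume "(j, m) \<in> shiftP 1 P"
      then obtain j0 m0 where jm: "(j0, m0) \<in> P" "j = j0 - 1" "m = m0 - 1" unfolding shiftP_def by auto
      have b: "2 \<le> j0" "2 \<le> m0" "j0 \<le> k" "m0 \<le> k" using Pge[OF jm(1)] by auto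
      have "f j0 \<ge> 2" "f m0 \<ge> 2" using fge b by auto
      moreover have "(x # w) ! (f j0 - 1) < (x # w) ! (f m0 - 1)" using f(3) jm(1) by blast
      moreover have "g j = f j0 - 1" "g m = f m0 - 1" using jm b by (auto simp: g_def)
      ultimately have e: "f j0 - 1 = Suc (g j - 1)" "f m0 - 1 = Suc (g m - 1)"
        and lt: "(x # w) ! (f j0 - 1) < (x # w) ! (f m0 - 1)" by auto
      show "w ! (g j - 1) < w ! (g m - 1)" using lt unfolding e by simp
    qed
    ultimately show "contains_pop w (k - 1) (shiftP 1 P)" unfolding contains_pop_def by blast
  }
  {
    assume "contains_pop w (k - 1) (shiftP 1 P)"
    then obtain g where g: "strict_mono_on {1..k - 1} g" "g ` {1..k - 1} \<subseteq> {1..length w}"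
      "\<forall>j m. (j, m) \<in> shiftP 1 P \<longrightarrow> w ! (g j - 1) < w ! (g m - 1)"
      unfolding contains_pop_def by auto
    define f where "f j = (if j = 1 then 1 else g (j - 1) + 1)" for j
    have gr: "g j \<ge> 1 \<and> g j \<le> length w" if "j \<in> {1..k-1}" for j using g(2) that by force
    have "strict_mono_on {1..k} f"
      unfolding strict_mono_on_def
    proof (intro allI impI)
      fix r s assume rs: "r \<in> {1..k} \<and> s \<in> {1..k} \<and> r < s"
      show "f r < f s"
      proof (cases "r = 1")
        case True
        then have "s - 1 \<in> {1..k-1}" using rs by auto
        then have "g (s - 1) \<ge> 1" using gr by blast
        then show ?thesis using True rs by (auto simp: f_def)
      next
        case False
        then have "r - 1 \<in> {1..k-1}" "s - 1 \<in> {1..k-1}" "r - 1 < s - 1" using rs by auto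
        then have "g (r - 1) < g (s - 1)" using g(1) by (simp add: strict_mono_onD)
        then show ?thesis using False rs by (auto simp: f_def)
      qed
    qed
    moreover have "f ` {1..k} \<subseteq> {1..length (x # w)}"
    proof
      fix y assume "y \<in> f ` {1..k}"
      then obtain j where j: "j \<in> {1..k}" "y = f j" by auto
      show "y \<in> {1..length (x # w)}"
      proof (cases "j = 1")
        case True then show ?thesis using j by (auto simp: f_def)
      next
        case False
        then have "j - 1 \<in> {1..k-1}" using j by auto
        then have "g (j - 1) \<le> length w" using gr by blast
        then show ?thesis using j False by (auto simp: f_def)
      qed
    qed
    moreover have "\<forall>j m. (j, m) \<in> P \<longrightarrow> (x # w) ! (f j - 1) < (x # w) ! (f m - 1)"
    proof (intro allI impI)
      fix j m assume jm: "(j, m) \<in> P"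
      have b: "2 \<le> j" "2 \<le> m" "j \<le> k" "m \<le> k" using Pge[OF jm] by auto
      have "(j - 1, m - 1) \<in> shiftP 1 P" using jm unfolding shiftP_def by force
      then have "w ! (g (j - 1) - 1) < w ! (g (m - 1) - 1)" using g(3) by blast
      moreover have "j - 1 \<in> {1..k-1}" "m - 1 \<in> {1..k-1}" using b by auto
      then have "g (j - 1) \<ge> 1" "g (m - 1) \<ge> 1" using gr by blast+
      ultimately show "(x # w) ! (f j - 1) < (x # w) ! (f m - 1)"
        using b by (auto simp: f_def)
    qed
    ultimately show "contains_pop (x # w) k P" unfolding contains_pop_def by blast
  }
qed


lemma contains_last:
  assumes "P \<subseteq> {1..k} \<times> {1..k}" "k \<ge> 1" "isolated P k"
  shows "contains_pop (w @ [x]) k P \<longleftrightarrow> contains_pop w (k - 1) P"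
proof
  have Pb: "\<And>j m. (j, m) \<in> P \<Longrightarrow> 1 \<le> j \<and> 1 \<le> m \<and> j < k \<and> m < k"
  proof -
    fix j m assume "(j, m) \<in> P"
    moreover have "j \<noteq> k" "m \<noteq> k" using assms(3) calculation unfolding isolated_def by blast+
    ultimately show "1 \<le> j \<and> 1 \<le> m \<and> j < k \<and> m < k" using assms(1) by force
  qed
  {
    assume "contains_pop (w @ [x]) k P"
    then obtain f where f: "strict_mono_on {1..k} f" "f ` {1..k} \<subseteq> {1..length w + 1}"
      "\<forall>j m. (j, m) \<in> P \<longrightarrow> (w @ [x]) ! (f j - 1) < (w @ [x]) ! (f m - 1)"
      unfolding contains_pop_def by auto
    have fk: "f k \<le> length w + 1" using f(2) assms(2) by force
    have fr: "f j \<ge> 1 \<and> f j \<le> length w" if "j \<in> {1..k-1}" for j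
    proof -
      have "f j < f k" using f(1) that assms(2) by (intro strict_mono_onD[OF f(1)]) auto
      moreover have "f j \<in> {1..length w + 1}"
      proof -
        have "j \<in> {1..k}" using that by auto
        then show ?thesis using f(2) by blast
      qed
      ultimately show ?thesis using fk by auto
    qed
    have "strict_mono_on {1..k - 1} f" 
      by (rule strict_mono_onI, rule strict_mono_onD[OF f(1)]) auto
    moreover have "f ` {1..k - 1} \<subseteq> {1..length w}" using fr by auto
    moreover have "\<forall>j m. (j, m) \<in> P \<longrightarrow> w ! (f j - 1) < w ! (f m - 1)"
    proof (intro allI impI)
      fix j m assume jm: "(j, m) \<in> P"
      have "j \<in> {1..k-1}" "m \<in> {1..k-1}" using Pb[OF jm] by auto
      then have "f j - 1 < length w" "f m - 1 < length w" using fr by force+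
      moreover have "(w @ [x]) ! (f j - 1) < (w @ [x]) ! (f m - 1)" using f(3) jm by blast
      ultimately show "w ! (f j - 1) < w ! (f m - 1)" by (simp add: nth_append)
    qed
    ultimately show "contains_pop w (k - 1) P" unfolding contains_pop_def by blast
  }
  {
    assume "contains_pop w (k - 1) P"
    then obtain g where g: "strict_mono_on {1..k - 1} g" "g ` {1..k - 1} \<subseteq> {1..length w}"
      "\<forall>j m. (j, m) \<in> P \<longrightarrow> w ! (g j - 1) < w ! (g m - 1)"
      unfolding contains_pop_def by auto
    define f where "f = g(k := length w + 1)"
    have gr: "g j \<ge> 1 \<and> g j \<le> length w" if "j \<in> {1..k-1}" for j using g(2) that by force
    have "strict_mono_on {1..k} f"
      unfolding strict_mono_on_def
    proof (intro allI impI)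
      fix r s assume rs: "r \<in> {1..k} \<and> s \<in> {1..k} \<and> r < s"
      then have r: "r \<in> {1..k-1}" by auto
      show "f r < f s"
      proof (cases "s = k")
        case True then show ?thesis using gr[OF r] rs by (auto simp: f_def)
      next
        case False
        then have "s \<in> {1..k-1}" using rs by auto
        then have "g r < g s" using g(1) r rs by (simp add: strict_mono_onD)
        then show ?thesis using False rs by (auto simp: f_def)
      qed
    qed
    moreover have "f ` {1..k} \<subseteq> {1..length (w @ [x])}"
    proof
      fix y assume "y \<in> f ` {1..k}"
      then obtain j where j: "j \<in> {1..k}" "y = f j" by auto
      show "y \<in> {1..length (w @ [x])}"
      proof (cases "j = k")
        case True then show ?thesis using j by (auto simp: f_def)
      next
        case False
        then have "j \<in> {1..k-1}" using j by auto
        then have "g j \<ge> 1 \<and> g j \<le> length w" using gr by blast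
        then show ?thesis using j False by (auto simp: f_def)
      qed
    qed
    moreover have "\<forall>j m. (j, m) \<in> P \<longrightarrow> (w @ [x]) ! (f j - 1) < (w @ [x]) ! (f m - 1)"
    proof (intro allI impI)
      fix j m assume jm: "(j, m) \<in> P"
      have b: "j \<in> {1..k-1}" "m \<in> {1..k-1}" "j \<noteq> k" "m \<noteq> k" using Pb[OF jm] by auto
      then have "g j - 1 < length w" "g m - 1 < length w" using gr by force+
      then show "(w @ [x]) ! (f j - 1) < (w @ [x]) ! (f m - 1)"
        using g(3) jm b by (simp add: f_def nth_append)
    qed
    ultimately show "contains_pop (w @ [x]) k P" unfolding contains_pop_def by blast
  }
qed

lemma cnt_first:
  assumes "P \<subseteq> {1..k} \<times> {1..k}" "k \<ge> 1" "isolated P 1" "n \<ge> 1"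
  shows "cnt k P {1..n} = n * cnt (k - 1) (shiftP 1 P) {1..n - 1}"
proof -
  have sub: "shiftP 1 P \<subseteq> {1..k-1} \<times> {1..k-1}"
  proof
    fix p assume "p \<in> shiftP 1 P"
    then obtain j m where jm: "(j, m) \<in> P" "p = (j - 1, m - 1)" unfolding shiftP_def by auto
    have "j \<noteq> 1" "m \<noteq> 1" using assms(3) jm(1) unfolding isolated_def by blast+
    then show "p \<in> {1..k-1} \<times> {1..k-1}" using jm assms(1) by force
  qed
  have "cnt k P {1..n} = (\<Sum>x\<in>{1..n}. card {v \<in> permutations_of_set ({1..n} - {x}). \<not> contains_pop (x # v) k P})"
    unfolding cnt_def using assms(4) by (intro count_cons) auto
  also have "\<dots> = (\<Sum>x\<in>{1..n}. cnt (k - 1) (shiftP 1 P) {1..n - 1})"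
  proof (intro sum.cong refl)
    fix x assume x: "x \<in> {1..n}"
    have "card {v \<in> permutations_of_set ({1..n} - {x}). \<not> contains_pop (x # v) k P}
        = cnt (k - 1) (shiftP 1 P) ({1..n} - {x})"
      unfolding cnt_def contains_first[OF assms(1-3)] ..
    also have "\<dots> = cnt (k - 1) (shiftP 1 P) {1..n - 1}"
      using cnt_card[OF _ sub, of "{1..n} - {x}"] x by simp
    finally show "card {v \<in> permutations_of_set ({1..n} - {x}). \<not> contains_pop (x # v) k P}
        = cnt (k - 1) (shiftP 1 P) {1..n - 1}" .
  qed
  also have "\<dots> = n * cnt (k - 1) (shiftP 1 P) {1..n - 1}" by simp
  finally show ?thesis .
qed

lemma cnt_last:
  assumes "P \<subseteq> {1..k} \<times> {1..k}" "k \<ge> 1" "isolated P k" "n \<ge> 1"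
  shows "cnt k P {1..n} = n * cnt (k - 1) P {1..n - 1}"
proof -
  have sub: "P \<subseteq> {1..k-1} \<times> {1..k-1}"
  proof
    fix p assume p: "p \<in> P"
    then obtain j m where jm: "(j, m) \<in> P" "p = (j, m)" by (cases p) auto
    have "j \<noteq> k" "m \<noteq> k" using assms(3) jm(1) unfolding isolated_def by blast+
    then show "p \<in> {1..k-1} \<times> {1..k-1}" using jm assms(1) by force
  qed
  have "cnt k P {1..n} = (\<Sum>x\<in>{1..n}. card {v \<in> permutations_of_set ({1..n} - {x}). \<not> contains_pop (v @ [x]) k P})"
    unfolding cnt_def using assms(4) by (intro count_snoc) auto
  also have "\<dots> = (\<Sum>x\<in>{1..n}. cnt (k - 1) P {1..n - 1})"
  proof (intro sum.cong refl)
    fix x assume x: "x \<in> {1..n}"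
    have "card {v \<in> permutations_of_set ({1..n} - {x}). \<not> contains_pop (v @ [x]) k P}
        = cnt (k - 1) P ({1..n} - {x})"
      unfolding cnt_def contains_last[OF assms(1-3)] ..
    also have "\<dots> = cnt (k - 1) P {1..n - 1}"
      using cnt_card[OF _ sub, of "{1..n} - {x}"] x by simp
    finally show "card {v \<in> permutations_of_set ({1..n} - {x}). \<not> contains_pop (v @ [x]) k P}
        = cnt (k - 1) P {1..n - 1}" .
  qed
  also have "\<dots> = n * cnt (k - 1) P {1..n - 1}" by simp
  finally show ?thesis .
qed


lemma shiftP_0 [simp]: "shiftP 0 P = P"
  unfolding shiftP_def by (simp add: case_prod_beta)

lemma shiftP_shiftP: "shiftP 1 (shiftP t P) = shiftP (Suc t) P"
  unfolding shiftP_def by (auto simp: image_image case_prod_beta)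

lemma shift_sub:
  assumes "P \<subseteq> {1..k} \<times> {1..k}" "\<forall>j\<in>{1..t}. isolated P j"
  shows "shiftP t P \<subseteq> {1..k-t} \<times> {1..k-t}"
proof
  fix p assume "p \<in> shiftP t P"
  then obtain j m where jm: "(j, m) \<in> P" "p = (j - t, m - t)" unfolding shiftP_def by auto
  have "j \<notin> {1..t}" "m \<notin> {1..t}" using assms(2) jm(1) unfolding isolated_def by blast+
  then show "p \<in> {1..k-t} \<times> {1..k-t}" using jm assms(1) by force
qed

lemma lead:
  assumes "P \<subseteq> {1..k} \<times> {1..k}" "\<forall>j\<in>{1..t}. isolated P j" "t \<le> k" "t \<le> n"
  shows "cnt k P {1..n} * fact (n - t) = fact n * cnt (k - t) (shiftP t P) {1..n - t}"
  using assms(2-4)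
proof (induction t)
  case 0
  then show ?case by simp
next
  case (Suc t)
  have IH: "cnt k P {1..n} * fact (n - t) = fact n * cnt (k - t) (shiftP t P) {1..n - t}"
    using Suc by auto
  define Q where "Q = shiftP t P"
  have Qsub: "Q \<subseteq> {1..k-t} \<times> {1..k-t}" unfolding Q_def
    by (rule shift_sub[OF assms(1)]) (use Suc.prems in auto)
  have iso: "isolated Q 1"
  proof -
    have it: "isolated P (Suc t)" using Suc.prems by auto
    show ?thesis unfolding isolated_def
    proof (intro allI conjI)
      fix m
      show "(1, m) \<notin> Q"
      proof
        assume "(1, m) \<in> Q"
        then obtain j0 m0 where "(j0, m0) \<in> P" "j0 - t = 1" unfolding Q_def shiftP_def by auto
        moreover then have "j0 = Suc t" by arith
        ultimately have "(Suc t, m0) \<in> P" by simp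
        then show False using it unfolding isolated_def by blast
      qed
      show "(m, 1) \<notin> Q"
      proof
        assume "(m, 1) \<in> Q"
        then obtain j0 m0 where "(j0, m0) \<in> P" "m0 - t = 1" unfolding Q_def shiftP_def by auto
        moreover then have "m0 = Suc t" by arith
        ultimately have "(j0, Suc t) \<in> P" by simp
        then show False using it unfolding isolated_def by blast
      qed
    qed
  qed
  have step: "cnt (k - t) Q {1..n - t} = (n - t) * cnt (k - t - 1) (shiftP 1 Q) {1..n - t - 1}"
    by (rule cnt_first[OF Qsub _ iso]) (use Suc.prems in auto)
  have nn: "n - t = Suc (n - Suc t)" using Suc.prems by arith
  have ee: "k - t - 1 = k - Suc t" "n - t - 1 = n - Suc t" by arith+
  have f: "(fact (n - t) :: nat) = (n - t) * fact (n - Suc t)"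
    unfolding nn by simp
  have "(n - t) * (cnt k P {1..n} * fact (n - Suc t)) = cnt k P {1..n} * fact (n - t)"
    unfolding f by (rule mult.left_commute)
  also have "\<dots> = fact n * cnt (k - t) Q {1..n - t}" using IH unfolding Q_def .
  also have "\<dots> = fact n * ((n - t) * cnt (k - Suc t) (shiftP (Suc t) P) {1..n - Suc t})"
    using step unfolding Q_def shiftP_shiftP ee by (rule arg_cong)
  also have "\<dots> = (n - t) * (fact n * cnt (k - Suc t) (shiftP (Suc t) P) {1..n - Suc t})"
    by (rule mult.left_commute)
  finally have "(n - t) * (cnt k P {1..n} * fact (n - Suc t)) = (n - t) * (fact n * cnt (k - Suc t) (shiftP (Suc t) P) {1..n - Suc t})" .
  moreover have "n - t > 0" using Suc.prems by auto
  ultimately show ?case by simp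
qed

lemma trail:
  assumes "P \<subseteq> {1..K} \<times> {1..K}" "\<forall>j\<in>{K - r + 1..K}. isolated P j" "r \<le> K" "r \<le> n"
  shows "cnt K P {1..n} * fact (n - r) = fact n * cnt (K - r) P {1..n - r}"
  using assms(2-4)
proof (induction r)
  case 0
  then show ?case by simp
next
  case (Suc r)
  have s: "\<forall>j\<in>{K - r + 1..K}. isolated P j"
  proof
    fix j assume "j \<in> {K - r + 1..K}"
    then have "j \<in> {K - Suc r + 1..K}" by auto
    then show "isolated P j" using Suc.prems(1) by blast
  qed
  have IH: "cnt K P {1..n} * fact (n - r) = fact n * cnt (K - r) P {1..n - r}"
    using Suc.IH[OF s] Suc.prems by auto
  have Psub: "P \<subseteq> {1..K-r} \<times> {1..K-r}"
  proof
    fix p assume p: "p \<in> P"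
    then obtain j m where jm: "(j, m) \<in> P" "p = (j, m)" by (cases p) auto
    have "j \<notin> {K - Suc r + 1..K}" "m \<notin> {K - Suc r + 1..K}"
      using Suc.prems(1) jm(1) unfolding isolated_def by blast+
    moreover have "K - Suc r + 1 \<le> K - r" using Suc.prems by auto
    ultimately have "j \<notin> {K - r..K}" "m \<notin> {K - r..K}" using Suc.prems by auto
    then show "p \<in> {1..K-r} \<times> {1..K-r}" using jm assms(1) by force
  qed
  have iso: "isolated P (K - r)" using Suc.prems by auto
  have step: "cnt (K - r) P {1..n - r} = (n - r) * cnt (K - r - 1) P {1..n - r - 1}"
    by (rule cnt_last[OF Psub _ iso]) (use Suc.prems in auto)
  have nn: "n - r = Suc (n - Suc r)" using Suc.prems by arith
  have ee: "K - r - 1 = K - Suc r" "n - r - 1 = n - Suc r" by arith+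
  have f: "(fact (n - r) :: nat) = (n - r) * fact (n - Suc r)"
    unfolding nn by simp
  have "(n - r) * (cnt K P {1..n} * fact (n - Suc r)) = cnt K P {1..n} * fact (n - r)"
    unfolding f by (rule mult.left_commute)
  also have "\<dots> = fact n * cnt (K - r) P {1..n - r}" using IH .
  also have "\<dots> = fact n * ((n - r) * cnt (K - Suc r) P {1..n - Suc r})"
    using step unfolding ee by (rule arg_cong)
  also have "\<dots> = (n - r) * (fact n * cnt (K - Suc r) P {1..n - Suc r})"
    by (rule mult.left_commute)
  finally have "(n - r) * (cnt K P {1..n} * fact (n - Suc r)) = (n - r) * (fact n * cnt (K - Suc r) P {1..n - Suc r})" .
  moreover have "n - r > 0" using Suc.prems by auto
  ultimately show ?case by simp
qed


theorem theorem2p4: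
  fixes k i s :: nat and P :: "(nat \<times> nat) set"
  assumes "k \<ge> 1" and "is_pop k P"
    and "i \<le> s" and "s \<le> k"
    and "\<forall>j \<in> {1..i} \<union> {k - s + i + 1..k}. isolated P j"
  defines "P1 \<equiv> {(j - i, m - i) | j m. (j, m) \<in> P \<and> i < j \<and> j \<le> k - s + i
                                       \<and> i < m \<and> m \<le> k - s + i}"
  shows "(\<forall>n < k. card (avoiders n k P) = fact n)
       \<and> (\<forall>n \<ge> k. real (card (avoiders n k P))
               = fact n / fact (n - s) * real (card (avoiders (n - s) (k - s) P1)))"
proof -
  have Psub: "P \<subseteq> {1..k} \<times> {1..k}" using assms(2) unfolding is_pop_def by auto
  have av: "card (avoiders n k' R) = cnt k' R {1..n}" for n k' R
    unfolding avoiders_def perms_def cnt_def ..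
  have part1: "\<forall>n < k. card (avoiders n k P) = fact n"
  proof (intro allI impI)
    fix n assume n: "n < k"
    have "\<not> contains_pop w k P" if "w \<in> perms n" for w :: "nat list"
    proof
      assume "contains_pop w k P"
      then obtain f where f: "strict_mono_on {1..k} f" "f ` {1..k} \<subseteq> {1..length w}"
        unfolding contains_pop_def by auto
      have "length w = n" using that unfolding perms_def
        using length_finite_permutations_of_set by fastforce
      moreover have "card {1..k} \<le> card {1..length w}"
        using card_inj_on_le[OF strict_mono_on_imp_inj_on[OF f(1)] f(2)] by simp
      ultimately show False using n by simp
    qed
    then have "avoiders n k P = perms n" unfolding avoiders_def by auto
    then show "card (avoiders n k P) = fact n" unfolding perms_def by simp
  qed
  have part2: "real (card (avoiders n k P))
               = fact n / fact (n - s) * real (card (avoiders (n - s) (k - s) P1))" if n: "n \<ge> k" for n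
  proof -
    have isoL: "\<forall>j\<in>{1..i}. isolated P j" using assms(5) by auto
    have L: "cnt k P {1..n} * fact (n - i) = fact n * cnt (k - i) (shiftP i P) {1..n - i}"
      by (rule lead[OF Psub isoL]) (use assms n in auto)
    define Q where "Q = shiftP i P"
    have Qsub: "Q \<subseteq> {1..k-i} \<times> {1..k-i}" unfolding Q_def by (rule shift_sub[OF Psub isoL])
    have Pb: "i < j \<and> j \<le> k - s + i \<and> i < m \<and> m \<le> k - s + i" if "(j, m) \<in> P" for j m
    proof -
      have "j \<notin> {1..i} \<union> {k - s + i + 1..k}" "m \<notin> {1..i} \<union> {k - s + i + 1..k}"
        using assms(5) that unfolding isolated_def by blast+
      then show ?thesis using Psub that by force
    qed
    have isoT: "\<forall>j\<in>{(k - i) - (s - i) + 1..k - i}. isolated Q j"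
    proof
      fix j assume j: "j \<in> {(k - i) - (s - i) + 1..k - i}"
      then have j': "j > k - s" using assms by auto
      show "isolated Q j" unfolding isolated_def
      proof (intro allI conjI)
        fix m
        show "(j, m) \<notin> Q"
        proof
          assume "(j, m) \<in> Q"
          then obtain j0 m0 where jm: "(j0, m0) \<in> P" "j = j0 - i" unfolding Q_def shiftP_def by auto
          then show False using Pb[OF jm(1)] j' by auto
        qed
        show "(m, j) \<notin> Q"
        proof
          assume "(m, j) \<in> Q"
          then obtain j0 m0 where jm: "(j0, m0) \<in> P" "j = m0 - i" unfolding Q_def shiftP_def by auto
          then show False using Pb[OF jm(1)] j' by auto
        qed
      qed
    qed
    have T: "cnt (k - i) Q {1..n - i} * fact (n - i - (s - i)) = fact (n - i) * cnt (k - i - (s - i)) Q {1..n - i - (s - i)}"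
      by (rule trail[OF Qsub isoT]) (use assms n in auto)
    have e1: "n - i - (s - i) = n - s" "k - i - (s - i) = k - s" using assms n by auto
    have QP1: "Q = P1"
    proof
      show "Q \<subseteq> P1" unfolding Q_def shiftP_def P1_def using Pb by fastforce
      show "P1 \<subseteq> Q" unfolding Q_def shiftP_def P1_def by force
    qed
    have "fact (n - i) * (cnt k P {1..n} * fact (n - s)) = fact (n - i) * (fact n * cnt (k - s) P1 {1..n - s})"
      using L T unfolding e1 QP1 Q_def[symmetric]
      by (metis (no_types, lifting) mult.assoc mult.commute)
    then have E: "cnt k P {1..n} * fact (n - s) = fact n * cnt (k - s) P1 {1..n - s}" by simp
    have "real (cnt k P {1..n}) * fact (n - s) = fact n * real (cnt (k - s) P1 {1..n - s})"
      using E by (metis of_nat_fact of_nat_mult)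
    then show ?thesis unfolding av by (simp add: field_simps)
  qed
  show ?thesis using part1 part2 by blast
qed

end
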